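(* Let $\mathrm{k}$ be an infinite field, $\mathcal{A}$ a unital associative $\mathrm{k}$-algebra satisfying $\mathbf{H}_{\mathrm{s}}$, $V$ a fixed finite-dimensional $\mathrm{k}$-subspace of $\mathcal{A}$ with $V\cap U(\mathcal{A})\neq\emptyset$, and $0<\lambda\leq1$ real. Then: (1) There exists a unique atom $\mathcal{H}_\lambda$ of $V$ containing $1$. (2) $\mathcal{H}_\lambda$ is a subalgebra of $\mathcal{A}$ containing $\mathcal{H}_l(V):=\{h\in\mathcal{A}\mid hV\subseteq V\}$. (3) The atoms of $V$ which intersect $U(\mathcal{A})$ are exactly the subspaces $x\mathcal{H}_\lambda$ with $x\in U(\mathcal{A})$. (4) For every finite-dimensional $\mathrm{k}$-subspace $W$ of $\mathcal{A}$ with $W\cap U(\mathcal{A})\neq\emptyset$, $\dim_{\mathrm{k}}(\mathrm{k}\langle WV\rangle)\geq\lambda\dim_{\mathrm{k}}(W)+\dim_{\mathrm{k}}(V)-\lambda\dim_{\mathrm{k}}(\mathcal{H}_\lambda)$.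
   Context: Algebras are unital associative, subalgebras contain $1$; $U(\mathcal{A})$ is the group of invertible elements; $\mathrm{k}\langle S\rangle$ is linear span, $\dim_{\mathrm{k}}(S)=\dim_{\mathrm{k}}\mathrm{k}\langle S\rangle$, $ST=\{st\mid s\in S,t\in T\}$. Hypothesis $\mathbf{H}_{\mathrm{s}}$: $\mathcal{A}$ is finite-dimensional over $\mathrm{k}$, or $\mathrm{k}\in\{\mathbb{R},\mathbb{C}\}$ and $\mathcal{A}$ is a Banach algebra over $\mathrm{k}$, or $\mathcal{A}$ is a finite product of field extensions of $\mathrm{k}$. Connectivity: for a finite-dimensional subspace $W$ set $c(W):=\dim_{\mathrm{k}}(\mathrm{k}\langle WV\rangle)-\lambda\dim_{\mathrm{k}}(W)$. Let $\kappa$ be the infimum of $c(W)$ over all finite-dimensional subspaces $W$ with $W\cap U(\mathcal{A})\neq\emptyset$. A fragment of $V$ is such a subspace $W$ (finite-dimensional, meeting $U(\mathcal{A})$) with $c(W)=\kappa$; an atom of $V$ is a fragment of minimal dimension. *)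

theory Defs
  imports Complex_Main
begin

definition is_algebra :: "('k::field \<Rightarrow> 'a::ring_1 \<Rightarrow> 'a) \<Rightarrow> bool" where
  "is_algebra sc \<longleftrightarrow> vector_space sc \<and>
     (\<forall>c x y. sc c (x * y) = sc c x * y \<and> sc c (x * y) = x * sc c y)"

definition units :: "'a::ring_1 set" where
  "units = {x. \<exists>y. x * y = 1 \<and> y * x = 1}"

abbreviation lspan :: "('k::field \<Rightarrow> 'a::ring_1 \<Rightarrow> 'a) \<Rightarrow> 'a set \<Rightarrow> 'a set" where
  "lspan sc S \<equiv> module.span sc S"

abbreviation ldim :: "('k::field \<Rightarrow> 'a::ring_1 \<Rightarrow> 'a) \<Rightarrow> 'a set \<Rightarrow> nat" where
  "ldim sc S \<equiv> vector_space.dim sc S"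

definition fin_dim_subspace :: "('k::field \<Rightarrow> 'a::ring_1 \<Rightarrow> 'a) \<Rightarrow> 'a set \<Rightarrow> bool" where
  "fin_dim_subspace sc W \<longleftrightarrow> (\<exists>B. finite B \<and> W = lspan sc B)"

definition setprod :: "'a::ring_1 set \<Rightarrow> 'a set \<Rightarrow> 'a set" where
  "setprod S T = {s * t | s t. s \<in> S \<and> t \<in> T}"

definition subalgebra :: "('k::field \<Rightarrow> 'a::ring_1 \<Rightarrow> 'a) \<Rightarrow> 'a set \<Rightarrow> bool" where
  "subalgebra sc H \<longleftrightarrow> module.subspace sc H \<and> 1 \<in> H \<and> (\<forall>x\<in>H. \<forall>y\<in>H. x * y \<in> H)"

definition field_iso :: "('k::field \<Rightarrow> 'f::field) \<Rightarrow> bool" where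
  "field_iso \<phi> \<longleftrightarrow> bij \<phi> \<and> \<phi> 1 = 1 \<and> (\<forall>a b. \<phi> (a + b) = \<phi> a + \<phi> b \<and> \<phi> (a * b) = \<phi> a * \<phi> b)"

definition banach_norm :: "('k::field \<Rightarrow> 'a::ring_1 \<Rightarrow> 'a) \<Rightarrow> ('k \<Rightarrow> real) \<Rightarrow> ('a \<Rightarrow> real) \<Rightarrow> bool" where
  "banach_norm sc av N \<longleftrightarrow>
     (\<forall>x. N x = 0 \<longleftrightarrow> x = 0) \<and>
     (\<forall>x y. N (x + y) \<le> N x + N y) \<and>
     (\<forall>c x. N (sc c x) = av c * N x) \<and>
     (\<forall>x y. N (x * y) \<le> N x * N y) \<and>
     (\<forall>f :: nat \<Rightarrow> 'a.
        (\<forall>e>0. \<exists>M. \<forall>m\<ge>M. \<forall>n\<ge>M. N (f m - f n) < e) \<longrightarrow>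
        (\<exists>L. \<forall>e>0. \<exists>M. \<forall>n\<ge>M. N (f n - L) < e))"

definition Hs :: "('k::field \<Rightarrow> 'a::ring_1 \<Rightarrow> 'a) \<Rightarrow> bool" where
  "Hs sc \<longleftrightarrow>
     fin_dim_subspace sc (UNIV :: 'a set)
   \<or> (\<exists>(\<phi> :: 'k \<Rightarrow> real) N. field_iso \<phi> \<and> banach_norm sc (\<lambda>c. \<bar>\<phi> c\<bar>) N)
   \<or> (\<exists>(\<phi> :: 'k \<Rightarrow> complex) N. field_iso \<phi> \<and> banach_norm sc (\<lambda>c. cmod (\<phi> c)) N)
   \<or> ((\<forall>x y :: 'a. x * y = y * x) \<and>
      (\<exists>n::nat. \<exists>e :: nat \<Rightarrow> 'a.
         (\<Sum>i<n. e i) = 1 \<and>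
         (\<forall>i<n. \<forall>j<n. e i * e j = (if i = j then e i else 0)) \<and>
         (\<forall>i<n. e i \<noteq> 0 \<and> (\<forall>x. e i * x \<noteq> 0 \<longrightarrow> (\<exists>y. (e i * x) * (e i * y) = e i)))))"

definition admissible :: "('k::field \<Rightarrow> 'a::ring_1 \<Rightarrow> 'a) \<Rightarrow> 'a set \<Rightarrow> bool" where
  "admissible sc W \<longleftrightarrow> fin_dim_subspace sc W \<and> W \<inter> units \<noteq> {}"

definition conn :: "('k::field \<Rightarrow> 'a::ring_1 \<Rightarrow> 'a) \<Rightarrow> real \<Rightarrow> 'a set \<Rightarrow> 'a set \<Rightarrow> real" where
  "conn sc lam V W = real (ldim sc (lspan sc (setprod W V))) - lam * real (ldim sc W)"

definition kappa :: "('k::field \<Rightarrow> 'a::ring_1 \<Rightarrow> 'a) \<Rightarrow> real \<Rightarrow> 'a set \<Rightarrow> real" where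
  "kappa sc lam V = Inf (conn sc lam V ` {W. admissible sc W})"

definition fragment :: "('k::field \<Rightarrow> 'a::ring_1 \<Rightarrow> 'a) \<Rightarrow> real \<Rightarrow> 'a set \<Rightarrow> 'a set \<Rightarrow> bool" where
  "fragment sc lam V W \<longleftrightarrow> admissible sc W \<and> conn sc lam V W = kappa sc lam V"

definition atom :: "('k::field \<Rightarrow> 'a::ring_1 \<Rightarrow> 'a) \<Rightarrow> real \<Rightarrow> 'a set \<Rightarrow> 'a set \<Rightarrow> bool" where
  "atom sc lam V W \<longleftrightarrow> fragment sc lam V W \<and>
     (\<forall>W'. fragment sc lam V W' \<longrightarrow> ldim sc W \<le> ldim sc W')"

definition left_stabilizer :: "'a::ring_1 set \<Rightarrow> 'a set" where
  "left_stabilizer V = {h. \<forall>v\<in>V. h * v \<in> V}"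

end

theory Submission
  imports Defs
begin

locale alg = vector_space sc for sc :: "'k::field \<Rightarrow> 'a::ring_1 \<Rightarrow> 'a" +
  assumes sc_left: "sc c (x * y) = sc c x * y" and sc_right: "sc c (x * y) = x * sc c y"
begin

definition fd :: "'a set \<Rightarrow> bool" where "fd S \<longleftrightarrow> (\<exists>B. finite B \<and> S \<subseteq> span B)"

lemma fd_mono: "fd T \<Longrightarrow> S \<subseteq> span T \<Longrightarrow> fd S"
  unfolding fd_def by (metis span_mono span_span subset_trans)

lemma fd_span: "finite B \<Longrightarrow> fd (span B)"
  unfolding fd_def by auto

lemma fd_spanI: "fd S \<Longrightarrow> fd (span S)"
  unfolding fd_def by (metis span_minimal subspace_span)

lemma fd_basis:
  assumes "fd S"
  obtains B where "finite B" "independent B" "B \<subseteq> S" "S \<subseteq> span B" "card B = dim S"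
proof -
  obtain B0 where B0: "finite B0" "S \<subseteq> span B0" using assms fd_def by auto
  obtain B where B: "B \<subseteq> S" "independent B" "S \<subseteq> span B" "card B = dim S" by (rule basis_exists)
  have "finite B" using independent_span_bound[OF B0(1) B(2)] B(1) B0(2) by auto
  with B that show ?thesis by auto
qed

lemma indep_card_le:
  assumes "fd S" "independent B" "B \<subseteq> span S"
  shows "finite B \<and> card B \<le> dim S"
proof -
  obtain C where C: "finite C" "independent C" "C \<subseteq> S" "S \<subseteq> span C" "card C = dim S"
    using fd_basis[OF assms(1)] by blast
  have "B \<subseteq> span C" using assms(3) C(4) by (metis span_minimal subspace_span subset_trans)
  from independent_span_bound[OF C(1) assms(2) this] C(5) show ?thesis by auto
qed

lemma dim_mono_fd:
  assumes "fd T" "S \<subseteq> span T"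
  shows "dim S \<le> dim T"
proof -
  obtain B where B: "B \<subseteq> S" "independent B" "S \<subseteq> span B" "card B = dim S" by (rule basis_exists)
  have "B \<subseteq> span T" using B(1) assms(2) by auto
  from indep_card_le[OF assms(1) B(2) this] B(4) show ?thesis by auto
qed

lemma subspace_eq_dim:
  assumes "fd T" "S \<subseteq> T" "subspace S" "subspace T" "dim T \<le> dim S"
  shows "S = T"
proof (rule ccontr)
  assume "S \<noteq> T"
  then obtain x where x: "x \<in> T" "x \<notin> S" using assms(2) by auto
  have fS: "fd S" using fd_mono[OF assms(1)] assms(2) span_superset by blast
  obtain B where B: "finite B" "independent B" "B \<subseteq> S" "S \<subseteq> span B" "card B = dim S"
    using fd_basis[OF fS] by blast
  have spB: "span B = S" using B(3,4) assms(3) span_subspace by blast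
  have xB: "x \<notin> span B" using x spB by auto
  have ind: "independent (insert x B)" using independent_insertI[OF xB B(2)] .
  have sub: "insert x B \<subseteq> span T" using x B(3) assms(2) span_superset by blast
  have "card (insert x B) \<le> dim T" using indep_card_le[OF assms(1) ind sub] by auto
  moreover have "card (insert x B) = Suc (dim S)" using B(1,5) xB span_superset by (metis card_insert_disjoint subsetD)
  ultimately show False using assms(5) by simp
qed

lemma grassmann:
  assumes sS: "subspace S" and sT: "subspace T" and fS: "fd S" and fT: "fd T"
  shows "dim (span (S \<union> T)) + dim (S \<inter> T) = dim S + dim T"
proof -
  have fI: "fd (S \<inter> T)" using fd_mono[OF fS, of "S \<inter> T"] span_superset[of S] by blast
  obtain C where C: "finite C" "independent C" "C \<subseteq> S \<inter> T" "S \<inter> T \<subseteq> span C" "card C = dim (S \<inter> T)"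
    using fd_basis[OF fI] by blast
  obtain B1 where B1: "C \<subseteq> B1" "B1 \<subseteq> S" "independent B1" "S \<subseteq> span B1"
    using maximal_independent_subset_extend[of C S] C(2,3) by blast
  obtain B2 where B2: "C \<subseteq> B2" "B2 \<subseteq> T" "independent B2" "T \<subseteq> span B2"
    using maximal_independent_subset_extend[of C T] C(2,3) by blast
  have "B1 \<subseteq> span S" using B1(2) span_superset[of S] by blast
  then have fB1: "finite B1" using indep_card_le[OF fS B1(3)] by blast
  have cB1: "card B1 = dim S" using basis_card_eq_dim[OF B1(2) B1(4) B1(3)] .
  have "B2 \<subseteq> span T" using B2(2) span_superset[of T] by blast
  then have fB2: "finite B2" using indep_card_le[OF fT B2(3)] by blast
  have cB2: "card B2 = dim T" using basis_card_eq_dim[OF B2(2) B2(4) B2(3)] .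
  have spS: "span B1 = S" using span_subspace[OF B1(2) B1(4) sS] .
  define D where "D = B2 - C"
  have fD: "finite D" using fB2 D_def by auto
  have key: "d \<notin> span (B1 \<union> F)" if d: "d \<in> D" and F: "F \<subseteq> D" "d \<notin> F" for d F
  proof
    assume "d \<in> span (B1 \<union> F)"
    then obtain s t where st: "d = s + t" "s \<in> span B1" "t \<in> span F" by (auto simp: span_Un)
    have dT: "d \<in> T" using d B2(2) D_def by auto
    have "F \<subseteq> T" using F B2(2) D_def by auto
    then have "span F \<subseteq> T" using sT by (rule span_minimal)
    then have tT: "t \<in> T" using st(3) by auto
    have "s = d - t" using st by simp
    then have "s \<in> T" using dT tT sT subspace_diff by simp
    moreover have "s \<in> S" using st(2) spS by simp
    ultimately have "s \<in> span C" using C(4) by auto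
    moreover have "C \<subseteq> B2 - {d}" using B2(1) d D_def by auto
    ultimately have "s \<in> span (B2 - {d})" using span_mono by blast
    moreover have "F \<subseteq> B2 - {d}" using F D_def d by auto
    then have "t \<in> span (B2 - {d})" using st(3) span_mono by blast
    ultimately have "d \<in> span (B2 - {d})" using st(1) span_add by simp
    moreover have "d \<in> B2" using d D_def by auto
    ultimately show False using B2(3) dependent_def by blast
  qed
  have indep: "independent (B1 \<union> F)" if "F \<subseteq> D" for F
  proof -
    have "finite F" using that fD finite_subset by blast
    then show ?thesis using that
    proof (induct F rule: finite_induct)
      case empty then show ?case using B1(3) by simp
    next
      case (insert a F)
      have "a \<notin> span (B1 \<union> F)" using key[of a F] insert by auto
      then show ?case using insert independent_insertI[of a "B1 \<union> F"] by auto
    qed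
  qed
  have disj: "B1 \<inter> D = {}"
  proof -
    { fix d assume "d \<in> B1" "d \<in> D"
      moreover have "d \<in> span (B1 \<union> {})" using \<open>d \<in> B1\<close> span_superset[of B1] by auto
      ultimately have False using key[of d "{}"] by blast }
    then show ?thesis by auto
  qed
  have cBD: "card (B1 \<union> D) = dim S + (dim T - dim (S \<inter> T))"
    using card_Un_disjoint[OF fB1 fD disj] cB1 cB2 C(5) D_def card_Diff_subset[OF C(1) B2(1)] by simp
  have sp1: "span (S \<union> T) \<subseteq> span (B1 \<union> D)"
  proof (rule span_minimal[OF _ subspace_span])
    have "span B2 \<subseteq> span (B1 \<union> D)" using B1(1) D_def by (intro span_mono) auto
    moreover have "span B1 \<subseteq> span (B1 \<union> D)" by (rule span_mono) auto
    ultimately show "S \<union> T \<subseteq> span (B1 \<union> D)" using B1(4) B2(4) by blast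
  qed
  have "fd (span (B1 \<union> D))" using fd_span[of "B1 \<union> D"] fB1 fD by simp
  then have fST: "fd (span (S \<union> T))" using fd_mono sp1 span_superset by (metis subset_trans)
  have le1: "dim (span (S \<union> T)) \<le> card (B1 \<union> D)" using dim_le_card[OF sp1] fB1 fD by simp
  have "B1 \<union> D \<subseteq> S \<union> T" using B1(2) B2(2) D_def by auto
  also have "S \<union> T \<subseteq> span (S \<union> T)" by (rule span_superset)
  finally have "B1 \<union> D \<subseteq> span (span (S \<union> T))" by (simp only: span_span)
  then have le2: "card (B1 \<union> D) \<le> dim (span (S \<union> T))"
    using indep_card_le[OF fST indep[of D]] by auto
  have "card C \<le> card B2" using card_mono[OF fB2 B2(1)] .
  then have "dim (S \<inter> T) \<le> dim T" using C(5) cB2 by simp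
  then show ?thesis using le1 le2 cBD by simp
qed

end


sublocale alg \<subseteq> vp: vector_space_pair sc sc ..

context alg begin

lemma units_inv: "x \<in> units \<Longrightarrow> \<exists>y. x * y = 1 \<and> y * x = 1" by (simp add: units_def)

lemma linear_left: "Vector_Spaces.linear sc sc (\<lambda>y. x * y)"
  unfolding Vector_Spaces.linear_iff using vector_space_axioms
  by (auto simp: distrib_left sc_right)

lemma linear_right: "Vector_Spaces.linear sc sc (\<lambda>y. y * x)"
  unfolding Vector_Spaces.linear_iff using vector_space_axioms
  by (auto simp: distrib_right sc_left)

lemma fd_image:
  assumes "Vector_Spaces.linear sc sc f" "fd S" shows "fd (f ` S)"
proof -
  obtain B where B: "finite B" "S \<subseteq> span B" using assms(2) fd_def by auto
  have "f ` S \<subseteq> span (f ` B)" using vp.linear_spans_image[OF assms(1) B(2)] .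
  then show ?thesis using B(1) fd_def by blast
qed

lemma dim_image_inj:
  assumes "Vector_Spaces.linear sc sc f" "inj f" "fd S" shows "dim (f ` S) = dim S"
proof -
  obtain B where B: "finite B" "independent B" "B \<subseteq> S" "S \<subseteq> span B" "card B = dim S"
    using fd_basis[OF assms(3)] by blast
  have i: "independent (f ` B)"
    using vp.linear_independent_injective_image[OF assms(1) B(2)] assms(2) by (meson inj_on_subset subset_UNIV)
  have "f ` S \<subseteq> span (f ` B)" using vp.linear_spans_image[OF assms(1) B(4)] .
  moreover have "f ` B \<subseteq> f ` S" using B(3) by auto
  moreover have "card (f ` B) = card B" using card_image assms(2) by (meson inj_on_subset subset_UNIV)
  ultimately show ?thesis using basis_card_eq_dim[of "f ` B" "f ` S"] i B(5) by simp
qed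

lemma unit_inj_left: "x \<in> units \<Longrightarrow> inj (\<lambda>y. x * y)"
proof (rule injI)
  fix a b assume u: "x \<in> units" and e: "x * a = x * b"
  obtain x' where x': "x' * x = 1" using u units_inv by blast
  have "x' * (x * a) = x' * (x * b)" using e by simp
  then show "a = b" by (simp flip: mult.assoc add: x')
qed

lemma unit_inj_right: "x \<in> units \<Longrightarrow> inj (\<lambda>y. y * x)"
proof (rule injI)
  fix a b assume u: "x \<in> units" and e: "a * x = b * x"
  obtain x' where x': "x * x' = 1" using u units_inv by blast
  have "(a * x) * x' = (b * x) * x'" using e by simp
  then show "a = b" by (simp add: mult.assoc x')
qed

lemma units_mult: assumes "x \<in> units" "y \<in> units" shows "x * y \<in> units"
proof -
  obtain x' where x': "x * x' = 1" "x' * x = 1" using assms(1) units_inv by blast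
  obtain y' where y': "y * y' = 1" "y' * y = 1" using assms(2) units_inv by blast
  have "(x * y) * (y' * x') = x * (y * y') * x'" by (simp only: mult.assoc)
  then have "(x * y) * (y' * x') = 1" by (simp add: y' x')
  moreover have "(y' * x') * (x * y) = y' * (x' * x) * y" by (simp only: mult.assoc)
  then have "(y' * x') * (x * y) = 1" by (simp add: y' x')
  ultimately show ?thesis unfolding units_def by blast
qed

lemma units_1: "1 \<in> units" unfolding units_def by auto

lemma mult_span:
  assumes "x \<in> span A" "y \<in> span B" shows "x * y \<in> span (setprod A B)"
proof -
  let ?M = "span (setprod A B)"
  have base: "a * y \<in> ?M" if a: "a \<in> A" for a
  proof -
    have s: "subspace {z. a * z \<in> ?M}" unfolding subspace_def
      by (auto simp: distrib_left sc_right[symmetric] span_zero span_add span_scale)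
    have "\<And>b. b \<in> B \<Longrightarrow> a * b \<in> ?M" using a by (auto intro!: span_base simp: setprod_def)
    from span_induct[where P="\<lambda>z. a * z \<in> ?M", OF assms(2) s this] show ?thesis by simp
  qed
  have s: "subspace {z. z * y \<in> ?M}" unfolding subspace_def
    by (auto simp: distrib_right sc_left[symmetric] span_zero span_add span_scale)
  have "\<And>a. a \<in> A \<Longrightarrow> a * y \<in> ?M" using base by blast
  from span_induct[where P="\<lambda>z. z * y \<in> ?M", OF assms(1) s this] show ?thesis by simp
qed

lemma setprod_span_sub:
  assumes "W \<subseteq> span A" "X \<subseteq> span B" shows "setprod W X \<subseteq> span (setprod A B)"
  using mult_span assms unfolding setprod_def by blast

lemma finite_setprod: "finite A \<Longrightarrow> finite B \<Longrightarrow> finite (setprod A B)"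
proof -
  assume "finite A" "finite B"
  then have "finite ((\<lambda>(a,b). a * b) ` (A \<times> B))" by simp
  moreover have "setprod A B = (\<lambda>(a,b). a * b) ` (A \<times> B)" unfolding setprod_def by auto
  ultimately show ?thesis by simp
qed

lemma fd_setprod: "fd W \<Longrightarrow> fd X \<Longrightarrow> fd (setprod W X)"
  unfolding fd_def using setprod_span_sub finite_setprod by metis

lemma setprod_mono: "W \<subseteq> W' \<Longrightarrow> X \<subseteq> X' \<Longrightarrow> setprod W X \<subseteq> setprod W' X'"
  unfolding setprod_def by blast

lemma setprod_image_left: "setprod ((\<lambda>h. x * h) ` W) X = (\<lambda>h. x * h) ` setprod W X"
proof
  show "setprod ((\<lambda>h. x * h) ` W) X \<subseteq> (\<lambda>h. x * h) ` setprod W X"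
    unfolding setprod_def by (force simp: mult.assoc)
  show "(\<lambda>h. x * h) ` setprod W X \<subseteq> setprod ((\<lambda>h. x * h) ` W) X"
  proof
    fix z assume "z \<in> (\<lambda>h. x * h) ` setprod W X"
    then obtain s t where "s \<in> W" "t \<in> X" "z = x * (s * t)" unfolding setprod_def by blast
    then show "z \<in> setprod ((\<lambda>h. x * h) ` W) X" unfolding setprod_def
      by (intro CollectI exI[of _ "x * s"] exI[of _ t]) (auto simp: mult.assoc)
  qed
qed

end


context alg begin

lemma fds_iff: "fin_dim_subspace sc W \<longleftrightarrow> subspace W \<and> fd W"
proof
  assume "fin_dim_subspace sc W"
  then obtain B where "finite B" "W = span B" unfolding fin_dim_subspace_def by blast
  then show "subspace W \<and> fd W" using fd_span by simp
next
  assume a: "subspace W \<and> fd W"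
  then obtain B where B: "finite B" "independent B" "B \<subseteq> W" "W \<subseteq> span B" "card B = dim W"
    using fd_basis by blast
  have "span B = W" using span_subspace[OF B(3) B(4)] a by simp
  then show "fin_dim_subspace sc W" unfolding fin_dim_subspace_def using B(1) by metis
qed

end

locale cs = alg sc for sc :: "'k::field \<Rightarrow> 'a::ring_1 \<Rightarrow> 'a" +
  fixes V :: "'a set" and lam :: real
  assumes fdsV: "fin_dim_subspace sc V" and unitV: "V \<inter> units \<noteq> {}"
    and lam_pos: "0 < lam" and lam_le: "lam \<le> 1"
begin

abbreviation P :: "'a set \<Rightarrow> 'a set" where "P W \<equiv> span (setprod W V)"

lemma sV: "subspace V" and fV: "fd V" using fdsV fds_iff by auto

lemma conn_eq: "conn sc lam V W = real (dim (P W)) - lam * real (dim W)"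
  unfolding conn_def by simp

lemma adm_fd: "admissible sc W \<Longrightarrow> subspace W \<and> fd W"
  unfolding admissible_def using fds_iff by blast

lemma fd_P: "fd W \<Longrightarrow> fd (P W)"
  using fd_setprod[OF _ fV] fd_spanI by blast

lemma dimP_ge:
  assumes "admissible sc W" shows "dim W \<le> dim (P W)" "dim V \<le> dim (P W)"
proof -
  have W: "subspace W" "fd W" using adm_fd[OF assms] by auto
  obtain w where w: "w \<in> W" "w \<in> units" using assms unfolding admissible_def by blast
  obtain v where v: "v \<in> V" "v \<in> units" using unitV by blast
  have fP: "fd (P W)" using fd_P W by simp
  have "(\<lambda>z. z * v) ` W \<subseteq> setprod W V" using v unfolding setprod_def by blast
  then have "(\<lambda>z. z * v) ` W \<subseteq> P W" using span_superset[of "setprod W V"] by blast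
  then have "(\<lambda>z. z * v) ` W \<subseteq> span (P W)" by (simp only: span_span)
  then have "dim ((\<lambda>z. z * v) ` W) \<le> dim (P W)" using dim_mono_fd[OF fP] by blast
  then show "dim W \<le> dim (P W)" using dim_image_inj[OF linear_right unit_inj_right[OF v(2)] W(2)] by simp
  have "(\<lambda>z. w * z) ` V \<subseteq> setprod W V" using w unfolding setprod_def by blast
  then have "(\<lambda>z. w * z) ` V \<subseteq> P W" using span_superset[of "setprod W V"] by blast
  then have "(\<lambda>z. w * z) ` V \<subseteq> span (P W)" by (simp only: span_span)
  then have "dim ((\<lambda>z. w * z) ` V) \<le> dim (P W)" using dim_mono_fd[OF fP] by blast
  then show "dim V \<le> dim (P W)" using dim_image_inj[OF linear_left unit_inj_left[OF w(2)] fV] by simp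
qed

lemma adm_1: "admissible sc (span {1})"
proof -
  have "1 \<in> span {1}" by (rule span_base) simp
  then show ?thesis unfolding admissible_def fin_dim_subspace_def using units_1 by blast
qed

lemma min_exists: "\<exists>W0. admissible sc W0 \<and> (\<forall>W. admissible sc W \<longrightarrow> conn sc lam V W0 \<le> conn sc lam V W)"
proof -
  define C where "C = conn sc lam V ` {W. admissible sc W}"
  define c1 where "c1 = conn sc lam V (span {1})"
  have c1C: "c1 \<in> C" using adm_1 C_def c1_def by blast
  define F where "F = {c \<in> C. c \<le> c1}"
  have finF: "finite F"
  proof (cases "lam = 1")
    case True
    have "F \<subseteq> real ` {..nat \<lceil>c1\<rceil>}"
    proof
      fix c assume "c \<in> F"
      then obtain W where W: "admissible sc W" "c = conn sc lam V W" "c \<le> c1" unfolding F_def C_def by blast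
      have "c = real (dim (P W)) - lam * real (dim W)" using W(2) conn_eq by simp
      then have "c = real (dim (P W) - dim W)" using dimP_ge(1)[OF W(1)] True by (simp add: of_nat_diff)
      moreover have "dim (P W) - dim W \<le> nat \<lceil>c1\<rceil>" using W(3) calculation by linarith
      ultimately show "c \<in> real ` {..nat \<lceil>c1\<rceil>}" by blast
    qed
    then show ?thesis by (rule finite_subset) simp
  next
    case False
    then have l1: "lam < 1" using lam_le by simp
    define N where "N = nat \<lceil>c1 / (1 - lam)\<rceil> + nat \<lceil>c1\<rceil>"
    have "F \<subseteq> (\<lambda>(a, b). real a - lam * real b) ` ({..N} \<times> {..N})"
    proof
      fix c assume "c \<in> F"
      then obtain W where W: "admissible sc W" "c = conn sc lam V W" "c \<le> c1" unfolding F_def C_def by blast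
      have d1: "dim W \<le> dim (P W)" using dimP_ge(1)[OF W(1)] .
      have e: "real (dim (P W)) - lam * real (dim W) \<le> c1" using W(2,3) conn_eq by simp
      have "(1 - lam) * real (dim W) \<le> c1" using e d1 by (simp add: algebra_simps)
      then have "real (dim W) \<le> c1 / (1 - lam)" using l1 by (simp add: field_simps mult.commute)
      then have dW: "dim W \<le> nat \<lceil>c1 / (1 - lam)\<rceil>" by linarith
      have "real (dim (P W)) \<le> c1 + lam * real (dim W)" using e by simp
      also have "\<dots> \<le> c1 + real (dim W)" using lam_le mult_right_mono[of lam 1 "real (dim W)"] by simp
      finally have dP: "dim (P W) \<le> N" using dW unfolding N_def by linarith
      have dW': "dim W \<le> N" using dW N_def by simp
      show "c \<in> (\<lambda>(a, b). real a - lam * real b) ` ({..N} \<times> {..N})"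
      proof (rule image_eqI[of _ _ "(dim (P W), dim W)"])
        show "c = (case (dim (P W), dim W) of (a, b) \<Rightarrow> real a - lam * real b)" using W(2) conn_eq by simp
      qed (use dW' dP in simp)
    qed
    then show ?thesis by (rule finite_subset) simp
  qed
  have "c1 \<in> F" using c1C F_def by simp
  then have "F \<noteq> {}" by blast
  then have mF: "Min F \<in> F" using Min_in[OF finF] by blast
  have mle: "\<And>c. c \<in> F \<Longrightarrow> Min F \<le> c" using Min_le[OF finF] by blast
  have "Min F \<in> C" using mF unfolding F_def by blast
  then obtain W0 where W0: "admissible sc W0" "conn sc lam V W0 = Min F" unfolding C_def by (metis imageE mem_Collect_eq)
  have "conn sc lam V W0 \<le> conn sc lam V W" if "admissible sc W" for W
  proof (cases "conn sc lam V W \<le> c1")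
    case True then have "conn sc lam V W \<in> F" using that unfolding F_def C_def by blast
    then show ?thesis using mle W0(2) by simp
  next
    case False then show ?thesis using mle[of c1] \<open>c1 \<in> F\<close> W0 by auto
  qed
  then show ?thesis using W0 by blast
qed

end


context cs begin

definition W0 where "W0 = (SOME W. admissible sc W \<and> (\<forall>W'. admissible sc W' \<longrightarrow> conn sc lam V W \<le> conn sc lam V W'))"

lemma W0: "admissible sc W0" "\<And>W. admissible sc W \<Longrightarrow> conn sc lam V W0 \<le> conn sc lam V W"
  using someI_ex[OF min_exists] unfolding W0_def by blast+

lemma kappa_eq: "kappa sc lam V = conn sc lam V W0"
  unfolding kappa_def by (rule cInf_eq_minimum) (use W0 in auto)

lemma kappa_le: "admissible sc W \<Longrightarrow> kappa sc lam V \<le> conn sc lam V W"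
  using kappa_eq W0 by simp

lemma fragment_W0: "fragment sc lam V W0"
  unfolding fragment_def using W0 kappa_eq by simp

lemma atom_exists: "\<exists>A. atom sc lam V A"
proof -
  obtain A where A: "fragment sc lam V A" "\<forall>W. fragment sc lam V W \<longrightarrow> dim A \<le> dim W"
    using ex_has_least_nat[of "fragment sc lam V" W0 dim] fragment_W0 by blast
  then show ?thesis unfolding atom_def by blast
qed

lemma translate:
  assumes x: "x \<in> units" and W: "admissible sc W"
  shows "admissible sc ((\<lambda>h. x * h) ` W)" "dim ((\<lambda>h. x * h) ` W) = dim W"
    "conn sc lam V ((\<lambda>h. x * h) ` W) = conn sc lam V W"
proof -
  let ?f = "\<lambda>h. x * h"
  have sW: "subspace W" "fd W" using adm_fd[OF W] by auto
  have s1: "subspace (?f ` W)" using vp.linear_subspace_image[OF linear_left sW(1)] .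
  have f1: "fd (?f ` W)" using fd_image[OF linear_left sW(2)] .
  obtain w where w: "w \<in> W" "w \<in> units" using W unfolding admissible_def by blast
  have "x * w \<in> ?f ` W \<inter> units" using w units_mult[OF x w(2)] by blast
  then show "admissible sc (?f ` W)" unfolding admissible_def using fds_iff s1 f1 by blast
  show d: "dim (?f ` W) = dim W" using dim_image_inj[OF linear_left unit_inj_left[OF x] sW(2)] .
  have e: "P (?f ` W) = ?f ` P W" unfolding setprod_image_left
    using vp.linear_span_image[OF linear_left] by simp
  have "dim (P (?f ` W)) = dim (P W)" unfolding e
    using dim_image_inj[OF linear_left unit_inj_left[OF x] fd_P[OF sW(2)]] .
  then show "conn sc lam V (?f ` W) = conn sc lam V W" unfolding conn_eq d by (rule arg_cong)
qed

lemma translate_back: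
  assumes "y * x = (1::'a)" shows "(\<lambda>h. y * h) ` ((\<lambda>h. x * h) ` W) = W"
proof -
  have "(\<lambda>h. y * (x * h)) = (\<lambda>h. h)"
  proof
    fix h have "y * (x * h) = (y * x) * h" by (rule mult.assoc[symmetric])
    then show "y * (x * h) = h" using assms by simp
  qed
  then show ?thesis by (subst image_image) (simp only: image_ident)
qed

lemma unit_inv: assumes "x \<in> units" obtains y where "y \<in> units" "x * y = 1" "y * x = 1"
proof -
  obtain y where y: "x * y = 1" "y * x = 1" using assms units_inv by blast
  then have "y \<in> units" unfolding units_def by blast
  with y that show ?thesis by blast
qed

lemma translate_fragment:
  assumes x: "x \<in> units" and W: "fragment sc lam V W"
  shows "fragment sc lam V ((\<lambda>h. x * h) ` W)"
  using translate[OF x] W unfolding fragment_def by simp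

lemma translate_atom:
  assumes x: "x \<in> units" and W: "atom sc lam V W"
  shows "atom sc lam V ((\<lambda>h. x * h) ` W)"
proof -
  have "admissible sc W" using W unfolding atom_def fragment_def by blast
  then have "dim ((\<lambda>h. x * h) ` W) = dim W" using translate(2)[OF x] by blast
  then show ?thesis using translate_fragment[OF x] W unfolding atom_def by simp
qed

lemma inter_fragment:
  assumes F1: "fragment sc lam V W1" and F2: "fragment sc lam V W2"
    and u: "u \<in> W1 \<inter> W2" "u \<in> units"
  shows "fragment sc lam V (W1 \<inter> W2)"
proof -
  have A1: "admissible sc W1" and A2: "admissible sc W2" using F1 F2 unfolding fragment_def by auto
  have s1: "subspace W1" "fd W1" and s2: "subspace W2" "fd W2" using adm_fd A1 A2 by auto
  have sI: "subspace (W1 \<inter> W2)" using subspace_inter s1 s2 by blast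
  have fI: "fd (W1 \<inter> W2)" using fd_mono[OF s1(2), of "W1 \<inter> W2"] span_superset[of W1] by blast
  have AI: "admissible sc (W1 \<inter> W2)" unfolding admissible_def using fds_iff sI fI u by blast
  let ?S = "span (W1 \<union> W2)"
  obtain B1 B2 where B: "finite B1" "W1 \<subseteq> span B1" "finite B2" "W2 \<subseteq> span B2"
    using s1 s2 fd_def by metis
  have "W1 \<union> W2 \<subseteq> span (B1 \<union> B2)" using B span_mono[of B1 "B1 \<union> B2"] span_mono[of B2 "B1 \<union> B2"] by blast
  then have "fd (W1 \<union> W2)" using B unfolding fd_def by blast
  then have fS: "fd ?S" by (rule fd_spanI)
  have "u \<in> ?S" using u span_superset[of "W1 \<union> W2"] by blast
  then have AS: "admissible sc ?S" unfolding admissible_def using fds_iff fS u by blast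
  have fP1: "fd (P W1)" and fP2: "fd (P W2)" using fd_P s1 s2 by auto
  have "fd (P W1 \<union> P W2)"
  proof -
    obtain C1 where C1: "finite C1" "P W1 \<subseteq> span C1" using fP1 fd_def by blast
    obtain C2 where C2: "finite C2" "P W2 \<subseteq> span C2" using fP2 fd_def by blast
    have "P W1 \<union> P W2 \<subseteq> span (C1 \<union> C2)"
      using C1(2) C2(2) span_mono[of C1 "C1 \<union> C2"] span_mono[of C2 "C1 \<union> C2"] by blast
    then show ?thesis unfolding fd_def using C1(1) C2(1) by blast
  qed
  then have fPU: "fd (span (P W1 \<union> P W2))" by (rule fd_spanI)
  have "setprod ?S V \<subseteq> span (P W1 \<union> P W2)"
  proof
    fix z assume "z \<in> setprod ?S V"
    then obtain a v where av: "a \<in> ?S" "v \<in> V" "z = a * v" unfolding setprod_def by blast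
    have "v \<in> span V" using av(2) span_superset by blast
    then have "z \<in> span (setprod (W1 \<union> W2) V)" using mult_span[OF av(1)] av(3) by (simp add: span_span)
    moreover have "setprod (W1 \<union> W2) V \<subseteq> P W1 \<union> P W2"
      using span_superset[of "setprod W1 V"] span_superset[of "setprod W2 V"] unfolding setprod_def by blast
    ultimately show "z \<in> span (P W1 \<union> P W2)" using span_mono by blast
  qed
  then have "P ?S \<subseteq> span (span (P W1 \<union> P W2))" by (simp add: span_span span_minimal)
  then have d1: "dim (P ?S) \<le> dim (span (P W1 \<union> P W2))" using dim_mono_fd[OF fPU] by blast
  have fPI: "fd (P W1 \<inter> P W2)" using fd_mono[OF fP1, of "P W1 \<inter> P W2"] span_superset[of "P W1"] by blast
  have "P (W1 \<inter> W2) \<subseteq> P W1 \<inter> P W2" using span_mono setprod_mono by (metis Int_lower1 Int_lower2 Int_greatest order_refl)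
  then have "P (W1 \<inter> W2) \<subseteq> span (P W1 \<inter> P W2)" using span_superset[of "P W1 \<inter> P W2"] by blast
  then have d2: "dim (P (W1 \<inter> W2)) \<le> dim (P W1 \<inter> P W2)" using dim_mono_fd[OF fPI] by blast
  have g1: "dim (span (P W1 \<union> P W2)) + dim (P W1 \<inter> P W2) = dim (P W1) + dim (P W2)"
    using grassmann[OF subspace_span subspace_span fP1 fP2] .
  have g2: "dim ?S + dim (W1 \<inter> W2) = dim W1 + dim W2"
    using grassmann[OF s1(1) s2(1) s1(2) s2(2)] .
  have k1: "conn sc lam V W1 = kappa sc lam V" "conn sc lam V W2 = kappa sc lam V" using F1 F2 unfolding fragment_def by auto
  have k2: "kappa sc lam V \<le> conn sc lam V ?S" "kappa sc lam V \<le> conn sc lam V (W1 \<inter> W2)"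
    using kappa_le AS AI by auto
  have r1: "real (dim (P ?S)) + real (dim (P (W1 \<inter> W2))) \<le> real (dim (P W1)) + real (dim (P W2))"
    using d1 d2 g1 by linarith
  have r2: "real (dim ?S) + real (dim (W1 \<inter> W2)) = real (dim W1) + real (dim W2)"
    using g2 by (metis of_nat_add)
  have "conn sc lam V ?S + conn sc lam V (W1 \<inter> W2) \<le> conn sc lam V W1 + conn sc lam V W2"
  proof -
    have "lam * real (dim ?S) + lam * real (dim (W1 \<inter> W2)) = lam * real (dim W1) + lam * real (dim W2)"
      using r2 by (metis distrib_left)
    then show ?thesis using r1 unfolding conn_eq[of ?S] conn_eq[of "W1 \<inter> W2"] conn_eq[of W1] conn_eq[of W2]
      by linarith
  qed
  then have "conn sc lam V (W1 \<inter> W2) = kappa sc lam V" using k1 k2 by linarith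
  then show ?thesis unfolding fragment_def using AI by simp
qed

lemma atom_unique:
  assumes A1: "atom sc lam V A1" and A2: "atom sc lam V A2"
    and u: "u \<in> A1 \<inter> A2" "u \<in> units"
  shows "A1 = A2"
proof -
  have F1: "fragment sc lam V A1" and F2: "fragment sc lam V A2" using A1 A2 unfolding atom_def by auto
  have FI: "fragment sc lam V (A1 \<inter> A2)" using inter_fragment[OF F1 F2 u] .
  have s1: "subspace A1" "fd A1" and s2: "subspace A2" "fd A2"
    using adm_fd F1 F2 unfolding fragment_def by auto
  have sI: "subspace (A1 \<inter> A2)" using subspace_inter s1 s2 by blast
  have "dim A1 \<le> dim (A1 \<inter> A2)" using A1 FI unfolding atom_def by blast
  then have e1: "A1 \<inter> A2 = A1" using subspace_eq_dim[OF s1(2) _ sI s1(1)] by blast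
  have "dim A2 \<le> dim (A1 \<inter> A2)" using A2 FI unfolding atom_def by blast
  then have e2: "A1 \<inter> A2 = A2" using subspace_eq_dim[OF s2(2) _ sI s2(1)] by blast
  from e1 e2 show ?thesis by simp
qed

end


lemma pow_small:
  fixes r K e :: real
  assumes "0 \<le> r" "r < 1" "0 < e"
  shows "\<exists>M. \<forall>n\<ge>M. K * r ^ n < e"
proof -
  have "(\<lambda>n. r ^ n) \<longlonglongrightarrow> 0" using assms by (intro LIMSEQ_power_zero) simp
  then have "(\<lambda>n. K * r ^ n) \<longlonglongrightarrow> K * 0" by (intro tendsto_mult tendsto_const)
  then have "(\<lambda>n. K * r ^ n) \<longlonglongrightarrow> 0" by simp
  then obtain M where "\<forall>n\<ge>M. dist (K * r ^ n) 0 < e" using assms(3) unfolding lim_sequentially by blast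
  then show ?thesis by (metis abs_less_iff dist_real_def diff_zero)
qed

lemma geo_tail:
  fixes r :: real
  assumes "0 \<le> r" "r < 1" "n \<le> m"
  shows "(\<Sum>i\<in>{n..<m}. r ^ i) \<le> r ^ n / (1 - r)"
proof -
  have "(1 - r) * (\<Sum>i\<in>{n..<m}. r ^ i) = r ^ n - r ^ m" using assms(3)
  proof (induct m rule: dec_induct)
    case base then show ?case by simp
  next
    case (step m)
    have IH: "(1 - r) * (\<Sum>i\<in>{n..<m}. r ^ i) = r ^ n - r ^ m" using step.hyps(3) .
    have "{n..<Suc m} = insert m {n..<m}" using step(1) by auto
    then have "(\<Sum>i\<in>{n..<Suc m}. r ^ i) = r ^ m + (\<Sum>i\<in>{n..<m}. r ^ i)" by simp
    then have "(1 - r) * (\<Sum>i\<in>{n..<Suc m}. r ^ i) = (1 - r) * r ^ m + (1 - r) * (\<Sum>i\<in>{n..<m}. r ^ i)"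
      by (simp add: distrib_left)
    also have "\<dots> = (1 - r) * r ^ m + (r ^ n - r ^ m)" using IH by simp
    also have "\<dots> = r ^ n - r ^ Suc m" by (simp add: algebra_simps)
    finally show ?case .
  qed
  moreover have "0 \<le> r ^ m" using assms(1) by simp
  ultimately have "(1 - r) * (\<Sum>i\<in>{n..<m}. r ^ i) \<le> r ^ n" by simp
  then show ?thesis using assms(2) by (simp add: field_simps mult.commute)
qed

context alg begin

lemma neumann:
  fixes av :: "'k \<Rightarrow> real" and N :: "'a \<Rightarrow> real"
  assumes bn: "banach_norm sc av N" and avm: "av (- 1) = 1" and Np: "N p < 1"
  shows "1 - p \<in> units"
proof -
  have N0: "\<And>x. N x = 0 \<longleftrightarrow> x = 0" and tri: "\<And>x y. N (x + y) \<le> N x + N y"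
    and hom: "\<And>c x. N (sc c x) = av c * N x" and sub: "\<And>x y. N (x * y) \<le> N x * N y"
    and compl: "\<And>f :: nat \<Rightarrow> 'a. (\<forall>e>0. \<exists>M. \<forall>m\<ge>M. \<forall>n\<ge>M. N (f m - f n) < e) \<Longrightarrow>
        (\<exists>L. \<forall>e>0. \<exists>M. \<forall>n\<ge>M. N (f n - L) < e)"
    using bn unfolding banach_norm_def by blast+
  have Nneg: "N (- x) = N x" for x
  proof -
    have e: "sc (- 1) x = - x" by simp
    have "N (sc (- 1) x) = av (- 1) * N x" by (rule hom)
    then show ?thesis unfolding e avm by simp
  qed
  have Nge: "0 \<le> N x" for x
  proof -
    have "N 0 \<le> N x + N (- x)" using tri[of x "- x"] by simp
    then show ?thesis using N0[of 0] Nneg by simp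
  qed
  have Nsym: "N (x - y) = N (y - x)" for x y using Nneg[of "x - y"] by simp
  define r where "r = N p"
  have r0: "0 \<le> r" and r1: "r < 1" using Nge Np r_def by auto
  define K where "K = N 1"
  have K0: "0 \<le> K" using Nge K_def by simp
  have pw: "N (p ^ n) \<le> K * r ^ n" for n
  proof (induct n)
    case 0 then show ?case using K_def by simp
  next
    case (Suc n)
    have "N (p ^ Suc n) \<le> N p * N (p ^ n)" using sub[of p "p ^ n"] by simp
    also have "\<dots> \<le> r * (K * r ^ n)" using Suc r_def r0 by (simp add: mult_left_mono)
    finally show ?case by (simp add: algebra_simps)
  qed
  have Nsum: "N (sum f A) \<le> (\<Sum>i\<in>A. N (f i))" if "finite A" for f :: "nat \<Rightarrow> 'a" and A
    using that
  proof (induct A rule: finite_induct)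
    case empty then show ?case using N0[of 0] by simp
  next
    case (insert a A)
    then show ?case using tri[of "f a" "sum f A"] by simp
  qed
  define S where "S n = (\<Sum>i<n. p ^ i)" for n
  have Sdiff: "N (S m - S n) \<le> K * r ^ n / (1 - r)" if "n \<le> m" for m n
  proof -
    have "S m - S n = (\<Sum>i\<in>{n..<m}. p ^ i)"
      unfolding S_def lessThan_atLeast0 using sum_diff_nat_ivl[of 0 n m] that by simp
    then have "N (S m - S n) \<le> (\<Sum>i\<in>{n..<m}. N (p ^ i))" using Nsum by simp
    also have "\<dots> \<le> (\<Sum>i\<in>{n..<m}. K * r ^ i)" using pw by (intro sum_mono) simp
    also have "\<dots> = K * (\<Sum>i\<in>{n..<m}. r ^ i)" by (simp add: sum_distrib_left)
    also have "\<dots> \<le> K * (r ^ n / (1 - r))" using geo_tail[OF r0 r1 that] K0 by (intro mult_left_mono)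
    finally show ?thesis by simp
  qed
  have cauchy: "\<forall>e>0. \<exists>M. \<forall>m\<ge>M. \<forall>n\<ge>M. N (S m - S n) < e"
  proof (intro allI impI)
    fix e :: real assume e: "0 < e"
    obtain M where M: "\<forall>n\<ge>M. (K / (1 - r)) * r ^ n < e" using pow_small[OF r0 r1 e] by blast
    have "N (S m - S n) < e" if "m \<ge> M" "n \<ge> M" for m n
    proof (cases "n \<le> m")
      case True
      then have "N (S m - S n) \<le> K * r ^ n / (1 - r)" using Sdiff by blast
      also have "\<dots> < e" using M that by simp
      finally show ?thesis .
    next
      case False
      then have "N (S n - S m) \<le> K * r ^ m / (1 - r)" using Sdiff by simp
      also have "\<dots> < e" using M that by simp
      finally show ?thesis using Nsym by simp
    qed
    then show "\<exists>M. \<forall>m\<ge>M. \<forall>n\<ge>M. N (S m - S n) < e" by blast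
  qed
  obtain L where L: "\<And>e. e > 0 \<Longrightarrow> \<exists>M. \<forall>n\<ge>M. N (S n - L) < e" using compl[OF cauchy] by blast
  have SL: "(1 - p) * S n = 1 - p ^ n" for n
  proof (induct n)
    case 0 then show ?case by (simp add: S_def)
  next
    case (Suc n)
    have eq: "S (Suc n) = S n + p ^ n" unfolding S_def by simp
    have "(1 - p) * S (Suc n) = (1 - p) * S n + (1 - p) * p ^ n" unfolding eq by (rule distrib_left)
    also have "\<dots> = (1 - p ^ n) + (1 - p) * p ^ n" unfolding Suc.hyps ..
    also have "\<dots> = 1 - p ^ Suc n" by (simp add: algebra_simps)
    finally show ?case .
  qed
  have SR: "S n * (1 - p) = 1 - p ^ n" for n
  proof (induct n)
    case 0 then show ?case by (simp add: S_def)
  next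
    case (Suc n)
    have eq: "S (Suc n) = S n + p ^ n" unfolding S_def by simp
    have "S (Suc n) * (1 - p) = S n * (1 - p) + p ^ n * (1 - p)" unfolding eq by (rule distrib_right)
    also have "\<dots> = (1 - p ^ n) + p ^ n * (1 - p)" unfolding Suc.hyps ..
    also have "\<dots> = 1 - p ^ Suc n" by (simp add: algebra_simps power_commutes)
    finally show ?case .
  qed
  have zero: "d = 0" if d0: "0 \<le> d" and dle: "\<And>n. d \<le> A * N (S n - L) + K * r ^ n" and A0: "0 \<le> A" for d A
  proof (rule ccontr)
    assume "d \<noteq> 0"
    then have dp: "0 < d" using d0 by simp
    have e1: "d / (2 * (A + 1)) > 0" using dp A0 by simp
    obtain M1 where M1: "\<forall>n\<ge>M1. N (S n - L) < d / (2 * (A + 1))" using L[OF e1] by blast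
    obtain M2 where M2: "\<forall>n\<ge>M2. K * r ^ n < d / 2" using pow_small[OF r0 r1, of "d / 2" K] dp by auto
    define n where "n = max M1 M2"
    have a1: "N (S n - L) < d / (2 * (A + 1))" using M1 n_def by simp
    have a2: "K * r ^ n < d / 2" using M2 n_def by simp
    have "A * N (S n - L) \<le> A * (d / (2 * (A + 1)))" using a1 A0 by (intro mult_left_mono) auto
    also have "\<dots> \<le> d / 2" using A0 dp by (simp add: field_simps)
    finally have "A * N (S n - L) + K * r ^ n < d" using a2 by simp
    then show False using dle[of n] by simp
  qed
  have left: "(1 - p) * L = 1"
  proof -
    define A where "A = N (1 - p)"
    have "N ((1 - p) * L - 1) \<le> A * N (S n - L) + K * r ^ n" for n
    proof -
      have "(1 - p) * L - 1 = (1 - p) * (L - S n) + - (p ^ n)" using SL[of n] by (simp add: algebra_simps)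
      then have "N ((1 - p) * L - 1) \<le> N ((1 - p) * (L - S n)) + N (- (p ^ n))" using tri[of "(1 - p) * (L - S n)" "- (p ^ n)"] by simp
      also have "\<dots> \<le> A * N (L - S n) + K * r ^ n" using sub[of "1 - p" "L - S n"] pw[of n] Nneg A_def by simp
      finally show ?thesis using Nsym by simp
    qed
    then have "N ((1 - p) * L - 1) = 0" using zero[OF Nge] Nge A_def by blast
    then show ?thesis using N0 by simp
  qed
  have right: "L * (1 - p) = 1"
  proof -
    define A where "A = N (1 - p)"
    have "N (L * (1 - p) - 1) \<le> A * N (S n - L) + K * r ^ n" for n
    proof -
      have "L * (1 - p) - 1 = (L - S n) * (1 - p) + - (p ^ n)" using SR[of n] by (simp add: algebra_simps)
      then have "N (L * (1 - p) - 1) \<le> N ((L - S n) * (1 - p)) + N (- (p ^ n))" using tri[of "(L - S n) * (1 - p)" "- (p ^ n)"] by simp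
      also have "\<dots> \<le> A * N (L - S n) + K * r ^ n" using sub[of "L - S n" "1 - p"] pw[of n] Nneg A_def
        by (simp add: mult.commute)
      finally show ?thesis using Nsym by simp
    qed
    then have "N (L * (1 - p) - 1) = 0" using zero[OF Nge] Nge A_def by blast
    then show ?thesis using N0 by simp
  qed
  show ?thesis unfolding units_def using left right by blast
qed

end


context cs begin

lemma main:
  assumes ex_units: "\<And>h. \<exists>c. c \<noteq> 0 \<and> 1 + sc c h \<in> units"
  shows "(\<exists>!H. atom sc lam V H \<and> 1 \<in> H) \<and>
    (\<forall>H. atom sc lam V H \<and> 1 \<in> H \<longrightarrow>
       subalgebra sc H \<and> left_stabilizer V \<subseteq> H \<and>
       (\<forall>W. (atom sc lam V W \<and> W \<inter> units \<noteq> {}) \<longleftrightarrow>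
            (\<exists>x\<in>units. W = (\<lambda>h. x * h) ` H)) \<and>
       (\<forall>W. admissible sc W \<longrightarrow>
            real (ldim sc (lspan sc (setprod W V)))
              \<ge> lam * real (ldim sc W) + real (ldim sc V) - lam * real (ldim sc H)))"
proof -
  have ex: "\<exists>H. atom sc lam V H \<and> 1 \<in> H"
  proof -
    obtain A where A: "atom sc lam V A" using atom_exists by blast
    then obtain u where u: "u \<in> A" "u \<in> units" unfolding atom_def fragment_def admissible_def by blast
    obtain u' where u': "u' \<in> units" "u * u' = 1" "u' * u = 1" using unit_inv[OF u(2)] by blast
    have "atom sc lam V ((\<lambda>h. u' * h) ` A)" using translate_atom[OF u'(1) A] .
    moreover have "1 \<in> (\<lambda>h. u' * h) ` A" using u(1) u'(3) by force
    ultimately show ?thesis by blast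
  qed
  have uniq: "H1 = H2" if "atom sc lam V H1 \<and> 1 \<in> H1" "atom sc lam V H2 \<and> 1 \<in> H2" for H1 H2
    using atom_unique[of H1 H2 1] that units_1 by blast
  have rest: "subalgebra sc H \<and> left_stabilizer V \<subseteq> H \<and>
       (\<forall>W. (atom sc lam V W \<and> W \<inter> units \<noteq> {}) \<longleftrightarrow>
            (\<exists>x\<in>units. W = (\<lambda>h. x * h) ` H)) \<and>
       (\<forall>W. admissible sc W \<longrightarrow>
            real (ldim sc (lspan sc (setprod W V)))
              \<ge> lam * real (ldim sc W) + real (ldim sc V) - lam * real (ldim sc H))"
    if H: "atom sc lam V H" "1 \<in> H" for H
  proof -
    have FH: "fragment sc lam V H" using H unfolding atom_def by blast
    have AH: "admissible sc H" using FH unfolding fragment_def by blast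
    have kH: "conn sc lam V H = kappa sc lam V" using FH unfolding fragment_def by blast
    have sH: "subspace H" "fd H" using adm_fd[OF AH] by auto
    have closed: "x * y \<in> H" if xy: "x \<in> H" "y \<in> H" for x y
    proof -
      obtain c where c: "c \<noteq> 0" "1 + sc c x \<in> units" using ex_units by blast
      define g where "g = 1 + sc c x"
      have gH: "g \<in> H" unfolding g_def using H(2) xy(1) sH(1) subspace_add subspace_scale by blast
      have gu: "g \<in> units" using c g_def by simp
      have "atom sc lam V ((\<lambda>h. g * h) ` H)" using translate_atom[OF gu H(1)] .
      moreover have "g \<in> ((\<lambda>h. g * h) ` H) \<inter> H" using gH H(2) by force
      ultimately have e: "(\<lambda>h. g * h) ` H = H" using atom_unique[OF _ H(1) _ gu] by blast
      have "g * y \<in> H" using e xy(2) by blast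
      moreover have "g * y = y + sc c (x * y)" unfolding g_def by (simp add: distrib_right sc_left)
      ultimately have "sc c (x * y) \<in> H" using xy(2) sH(1) subspace_diff by (metis add_diff_cancel_left')
      then have "sc (inverse c) (sc c (x * y)) \<in> H" using sH(1) subspace_scale by blast
      then show ?thesis using c(1) by simp
    qed
    have SA: "subalgebra sc H" unfolding subalgebra_def using sH(1) H(2) closed by blast
    have stab: "left_stabilizer V \<subseteq> H"
    proof -
      define S where "S = left_stabilizer V"
      obtain v where v: "v \<in> V" "v \<in> units" using unitV by blast
      obtain v' where v': "v' \<in> units" "v * v' = 1" "v' * v = 1" using unit_inv[OF v(2)] by blast
      have "S \<subseteq> (\<lambda>z. z * v') ` V"
      proof
        fix h assume "h \<in> S"
        then have "h * v \<in> V" using v(1) unfolding S_def left_stabilizer_def by blast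
        moreover have "h = (h * v) * v'" by (simp add: mult.assoc v'(2))
        ultimately show "h \<in> (\<lambda>z. z * v') ` V" by blast
      qed
      moreover have "fd ((\<lambda>z. z * v') ` V)" using fd_image[OF linear_right fV] .
      ultimately have fS: "fd S" using fd_mono span_superset by (metis subset_trans)
      define W' where "W' = span (H \<union> S)"
      have "fd (H \<union> S)"
      proof -
        obtain C1 where C1: "finite C1" "H \<subseteq> span C1" using sH(2) fd_def by blast
        obtain C2 where C2: "finite C2" "S \<subseteq> span C2" using fS fd_def by blast
        have "H \<union> S \<subseteq> span (C1 \<union> C2)"
          using C1(2) C2(2) span_mono[of C1 "C1 \<union> C2"] span_mono[of C2 "C1 \<union> C2"] by blast
        then show ?thesis unfolding fd_def using C1(1) C2(1) by blast
      qed
      then have fW': "fd W'" unfolding W'_def by (rule fd_spanI)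
      have HW': "H \<subseteq> W'" unfolding W'_def using span_superset[of "H \<union> S"] by blast
      have AW': "admissible sc W'" unfolding admissible_def using fds_iff fW' HW' H(2) units_1 W'_def by blast
      have VPH: "V \<subseteq> P H"
      proof
        fix z assume "z \<in> V"
        then have "1 * z \<in> setprod H V" using H(2) unfolding setprod_def by blast
        then show "z \<in> P H" using span_superset[of "setprod H V"] by auto
      qed
      have sub: "subspace {a. \<forall>z\<in>V. a * z \<in> P H}" unfolding subspace_def
        by (auto simp: distrib_right sc_left[symmetric] span_zero span_add span_scale)
      have base: "\<And>a. a \<in> H \<union> S \<Longrightarrow> \<forall>z\<in>V. a * z \<in> P H"
      proof -
        fix a assume "a \<in> H \<union> S"
        then show "\<forall>z\<in>V. a * z \<in> P H"
        proof
          assume "a \<in> H" then show ?thesis using span_superset[of "setprod H V"] unfolding setprod_def by blast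
        next
          assume "a \<in> S" then show ?thesis using VPH unfolding S_def left_stabilizer_def by blast
        qed
      qed
      have "setprod W' V \<subseteq> P H"
      proof
        fix z assume "z \<in> setprod W' V"
        then obtain a w where aw: "a \<in> W'" "w \<in> V" "z = a * w" unfolding setprod_def by blast
        have "\<forall>z\<in>V. a * z \<in> P H"
          using span_induct[where P="\<lambda>a. \<forall>z\<in>V. a * z \<in> P H", OF aw(1)[unfolded W'_def] sub base] .
        then show "z \<in> P H" using aw by blast
      qed
      then have "P W' \<subseteq> P H" using span_minimal[OF _ subspace_span] by blast
      then have "P W' \<subseteq> span (P H)" by (simp only: span_span)
      then have d1: "dim (P W') \<le> dim (P H)" using dim_mono_fd[OF fd_P[OF sH(2)]] by blast
      have "kappa sc lam V \<le> conn sc lam V W'" using kappa_le[OF AW'] .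
      then have "real (dim (P H)) - lam * real (dim H) \<le> real (dim (P W')) - lam * real (dim W')"
        using kH conn_eq by simp
      then have "lam * real (dim W') \<le> lam * real (dim H)" using d1 by linarith
      then have "dim W' \<le> dim H" using lam_pos by simp
      moreover have "subspace W'" unfolding W'_def by simp
      ultimately have "H = W'" using subspace_eq_dim[OF fW' HW' sH(1)] by blast
      then show ?thesis using W'_def span_superset[of "H \<union> S"] S_def by blast
    qed
    have tr: "(atom sc lam V W \<and> W \<inter> units \<noteq> {}) \<longleftrightarrow> (\<exists>x\<in>units. W = (\<lambda>h. x * h) ` H)" for W
    proof
      assume a: "atom sc lam V W \<and> W \<inter> units \<noteq> {}"
      then obtain w where w: "w \<in> W" "w \<in> units" by blast
      obtain w' where w': "w' \<in> units" "w * w' = 1" "w' * w = 1" using unit_inv[OF w(2)] by blast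
      have "atom sc lam V ((\<lambda>h. w' * h) ` W)" using translate_atom[OF w'(1)] a by blast
      moreover have "1 \<in> (\<lambda>h. w' * h) ` W" using w(1) w'(3) by force
      ultimately have "(\<lambda>h. w' * h) ` W = H" using uniq H by blast
      then have "W = (\<lambda>h. w * h) ` H" using translate_back[OF w'(2), of W] by simp
      then show "\<exists>x\<in>units. W = (\<lambda>h. x * h) ` H" using w(2) by blast
    next
      assume "\<exists>x\<in>units. W = (\<lambda>h. x * h) ` H"
      then obtain x where x: "x \<in> units" "W = (\<lambda>h. x * h) ` H" by blast
      have "atom sc lam V W" using translate_atom[OF x(1) H(1)] x(2) by simp
      moreover have "x \<in> W" using x(2) H(2) by force
      ultimately show "atom sc lam V W \<and> W \<inter> units \<noteq> {}" using x(1) by blast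
    qed
    have lb: "real (ldim sc (lspan sc (setprod W V)))
              \<ge> lam * real (ldim sc W) + real (ldim sc V) - lam * real (ldim sc H)"
      if W: "admissible sc W" for W
    proof -
      have "kappa sc lam V \<le> conn sc lam V W" using kappa_le[OF W] .
      then have "real (dim (P H)) - lam * real (dim H) \<le> real (dim (P W)) - lam * real (dim W)"
        using kH conn_eq by simp
      moreover have "dim V \<le> dim (P H)" using dimP_ge(2)[OF AH] .
      ultimately show ?thesis by simp
    qed
    show ?thesis using SA stab tr lb by blast
  qed
  have e1: "\<exists>!H. atom sc lam V H \<and> 1 \<in> H" using ex_ex1I[OF ex uniq] .
  show ?thesis by (intro conjI[OF e1] allI impI, rule rest) auto
qed

end


lemma field_iso_basic:
  assumes "field_iso (\<phi> :: 'k::field \<Rightarrow> 'f::field)"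
  shows "\<phi> 0 = 0" "\<phi> (- 1) = - 1" "\<And>y. \<exists>c. \<phi> c = y"
proof -
  have add: "\<And>a b. \<phi> (a + b) = \<phi> a + \<phi> b" and one: "\<phi> 1 = 1" and b: "bij \<phi>"
    using assms unfolding field_iso_def by auto
  have "\<phi> (0 + 0) = \<phi> 0 + \<phi> 0" by (rule add)
  then show z: "\<phi> 0 = 0" by (metis add_0 add_cancel_right_right)
  have "\<phi> (- 1 + 1) = \<phi> (- 1) + \<phi> 1" by (rule add)
  then show "\<phi> (- 1) = - 1" using z one by (simp add: eq_neg_iff_add_eq_0)
  show "\<And>y. \<exists>c. \<phi> c = y" using b unfolding bij_def surj_def by metis
qed

context alg begin

lemma banach_units:
  fixes av :: "'k \<Rightarrow> real" and N :: "'a \<Rightarrow> real"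
  assumes bn: "banach_norm sc av N" and avm: "av (- 1) = 1"
    and avr: "\<And>r. r > 0 \<Longrightarrow> \<exists>c. c \<noteq> 0 \<and> av c = r"
  shows "\<exists>c. c \<noteq> 0 \<and> 1 + sc c h \<in> units"
proof -
  have N0: "\<And>x. N x = 0 \<longleftrightarrow> x = 0" and tri: "\<And>x y. N (x + y) \<le> N x + N y"
    and hom: "\<And>c x. N (sc c x) = av c * N x"
    using bn unfolding banach_norm_def by blast+
  have Nneg: "N (- x) = N x" for x
  proof -
    have e: "sc (- 1) x = - x" by simp
    have "N (sc (- 1) x) = av (- 1) * N x" by (rule hom)
    then show ?thesis unfolding e avm by simp
  qed
  have Nge: "0 \<le> N x" for x
  proof -
    have "N 0 \<le> N x + N (- x)" using tri[of x "- x"] by simp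
    then show ?thesis using N0[of 0] Nneg by simp
  qed
  define r where "r = 1 / (N h + 1)"
  have r0: "r > 0" using Nge[of h] r_def by simp
  obtain c where c: "c \<noteq> 0" "av c = r" using avr[OF r0] by blast
  have "N (- sc c h) = r * N h" using Nneg hom c(2) by simp
  also have "\<dots> < 1" unfolding r_def using Nge[of h] by (simp add: field_simps)
  finally have "1 - (- sc c h) \<in> units" using neumann[OF bn avm] by blast
  then show ?thesis using c(1) by auto
qed

lemma banach_units_real:
  assumes "field_iso (\<phi> :: 'k \<Rightarrow> real)" "banach_norm sc (\<lambda>c. \<bar>\<phi> c\<bar>) N"
  shows "\<exists>c. c \<noteq> 0 \<and> 1 + sc c h \<in> units"
proof (rule banach_units[OF assms(2)])
  show "\<bar>\<phi> (- 1)\<bar> = 1" using field_iso_basic[OF assms(1)] by simp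
  fix r :: real assume "r > 0"
  obtain c where "\<phi> c = r" using field_iso_basic(3)[OF assms(1)] by blast
  then show "\<exists>c. c \<noteq> 0 \<and> \<bar>\<phi> c\<bar> = r" using \<open>r > 0\<close> field_iso_basic(1)[OF assms(1)]
    by (metis abs_of_pos less_irrefl)
qed

lemma banach_units_complex:
  assumes "field_iso (\<phi> :: 'k \<Rightarrow> complex)" "banach_norm sc (\<lambda>c. cmod (\<phi> c)) N"
  shows "\<exists>c. c \<noteq> 0 \<and> 1 + sc c h \<in> units"
proof (rule banach_units[OF assms(2)])
  show "cmod (\<phi> (- 1)) = 1" using field_iso_basic[OF assms(1)] by simp
  fix r :: real assume "r > 0"
  obtain c where c: "\<phi> c = complex_of_real r" using field_iso_basic(3)[OF assms(1)] by blast
  then have "c \<noteq> 0" using \<open>r > 0\<close> field_iso_basic(1)[OF assms(1)] by auto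
  moreover have "cmod (\<phi> c) = r" using c \<open>r > 0\<close> by simp
  ultimately show "\<exists>c. c \<noteq> 0 \<and> cmod (\<phi> c) = r" by blast
qed

end


lemma finite_subsingleton: "(\<And>x y. P x \<Longrightarrow> P y \<Longrightarrow> x = y) \<Longrightarrow> finite {x. P x}"
proof -
  assume u: "\<And>x y. P x \<Longrightarrow> P y \<Longrightarrow> x = y"
  show ?thesis
  proof (cases "\<exists>x. P x")
    case True
    then obtain x0 where "P x0" by blast
    then have "{x. P x} \<subseteq> {x0}" using u by blast
    then show ?thesis using finite_subset by blast
  next
    case False then show ?thesis by simp
  qed
qed

context alg begin

lemma prod_units:
  fixes e :: "nat \<Rightarrow> 'a"
  assumes inf: "infinite (UNIV :: 'k set)"
    and comm: "\<forall>x y :: 'a. x * y = y * x"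
    and sumE: "(\<Sum>i<n. e i) = 1"
    and idem: "\<forall>i<n. \<forall>j<n. e i * e j = (if i = j then e i else 0)"
    and fld: "\<forall>i<n. e i \<noteq> 0 \<and> (\<forall>x. e i * x \<noteq> 0 \<longrightarrow> (\<exists>y. (e i * x) * (e i * y) = e i))"
  shows "\<exists>c. c \<noteq> 0 \<and> 1 + sc c h \<in> units"
proof -
  have crit: "a \<in> units" if a: "\<forall>i<n. e i * a \<noteq> 0" for a
  proof -
    have "\<forall>i<n. \<exists>y. (e i * a) * (e i * y) = e i" using a fld by blast
    then obtain Y where Y: "\<And>i. i < n \<Longrightarrow> (e i * a) * (e i * Y i) = e i" by metis
    define y where "y = (\<Sum>i<n. e i * Y i)"
    have t: "a * (e i * Y i) = e i" if i: "i < n" for i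
    proof -
      have ee: "e i * e i = e i" using idem i by simp
      have "(e i * a) * (e i * Y i) = e i * (a * e i) * Y i" by (simp add: mult.assoc)
      also have "\<dots> = e i * (e i * a) * Y i" using comm by metis
      also have "\<dots> = (e i * e i) * (a * Y i)" by (simp add: mult.assoc)
      also have "\<dots> = e i * (a * Y i)" using ee by simp
      also have "\<dots> = (e i * a) * Y i" by (simp add: mult.assoc)
      also have "\<dots> = (a * e i) * Y i" using comm by metis
      also have "\<dots> = a * (e i * Y i)" by (simp add: mult.assoc)
      finally show ?thesis using Y[OF i] by simp
    qed
    have "a * y = (\<Sum>i<n. a * (e i * Y i))" unfolding y_def by (rule sum_distrib_left)
    also have "\<dots> = (\<Sum>i<n. e i)" using t by simp
    finally have ay: "a * y = 1" using sumE by simp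
    then have "y * a = 1" using comm by metis
    then show ?thesis using ay unfolding units_def by blast
  qed
  define B where "B = (\<Union>i<n. {c. e i + sc c (e i * h) = 0})"
  have finB: "finite B" unfolding B_def
  proof (intro finite_UN_I finite_lessThan finite_subsingleton)
    fix i c1 c2 assume i: "i \<in> {..<n}" and c1: "e i + sc c1 (e i * h) = 0" and c2: "e i + sc c2 (e i * h) = 0"
    then have "sc c1 (e i * h) = sc c2 (e i * h)" by (metis add_left_cancel)
    then have "c1 = c2 \<or> e i * h = 0" by simp
    moreover have "e i * h = 0 \<Longrightarrow> e i = 0" using c1 by simp
    ultimately show "c1 = c2" using fld i by auto
  qed
  have "infinite (UNIV - insert 0 B)" using inf finB by simp
  then obtain c where c: "c \<notin> insert 0 B" by (metis Diff_iff finite.emptyI infinite_imp_nonempty ex_in_conv)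
  have "\<forall>i<n. e i * (1 + sc c h) \<noteq> 0"
  proof (intro allI impI)
    fix i assume i: "i < n"
    have "e i * (1 + sc c h) = e i + sc c (e i * h)" by (simp add: distrib_left sc_right)
    then show "e i * (1 + sc c h) \<noteq> 0" using c i unfolding B_def by auto
  qed
  then show ?thesis using crit c by blast
qed

end


context alg begin

lemma units_scale:
  assumes u: "u \<in> units" and c: "c \<noteq> 0" shows "sc c u \<in> units"
proof -
  obtain u' where u': "u * u' = 1" "u' * u = 1" using u units_inv by blast
  have "sc c u * sc (inverse c) u' = sc c (u * sc (inverse c) u')" by (rule sc_left[symmetric])
  also have "\<dots> = sc c (sc (inverse c) (u * u'))" by (simp only: sc_right)
  also have "\<dots> = 1" using c u' by simp
  finally have 1: "sc c u * sc (inverse c) u' = 1" .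
  have "sc (inverse c) u' * sc c u = sc (inverse c) (u' * sc c u)" by (rule sc_left[symmetric])
  also have "\<dots> = sc (inverse c) (sc c (u' * u))" by (simp only: sc_right)
  also have "\<dots> = 1" using c u' by simp
  finally have 2: "sc (inverse c) u' * sc c u = 1" .
  from 1 2 show ?thesis unfolding units_def by blast
qed

lemma fd_units:
  assumes inf: "infinite (UNIV :: 'k set)" and fdU: "fin_dim_subspace sc (UNIV :: 'a set)"
  shows "\<exists>c. c \<noteq> 0 \<and> 1 + sc c h \<in> units"
proof -
  have "fd (UNIV :: 'a set)" using fdU fds_iff by blast
  then obtain Bb where Bb: "finite Bb" "independent Bb" "UNIV \<subseteq> span Bb"
    using fd_basis by (metis subset_UNIV)
  have spB: "span Bb = UNIV" using Bb(3) by blast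
  interpret fdv: finite_dimensional_vector_space sc Bb
    by unfold_locales (use Bb spB in auto)
  have zd: "\<exists>x. x \<noteq> 0 \<and> a * x = 0" if na: "a \<notin> units" for a :: 'a
  proof (rule ccontr)
    assume "\<not> (\<exists>x. x \<noteq> 0 \<and> a * x = 0)"
    then have z: "\<And>x. a * x = 0 \<Longrightarrow> x = 0" by blast
    have inj: "inj (\<lambda>x. a * x)"
    proof (rule injI)
      fix x y assume "a * x = a * y"
      then have "a * (x - y) = 0" by (simp add: right_diff_distrib)
      then have "x - y = 0" using z by blast
      then show "x = y" by simp
    qed
    have "surj (\<lambda>x. a * x)" using fdv.linear_inj_imp_surj[OF linear_left inj] .
    then obtain y where y: "a * y = 1" by (metis surj_def)
    have "a * (y * a - 1) = (a * y) * a - a" by (simp add: right_diff_distrib mult.assoc)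
    also have "\<dots> = 0" using y by simp
    finally have "y * a - 1 = 0" using z by blast
    then have "y * a = 1" by simp
    then show False using y na unfolding units_def by blast
  qed
  define T where "T = {t. h + sc t 1 \<notin> units}"
  have "\<forall>t\<in>T. \<exists>x. x \<noteq> 0 \<and> (h + sc t 1) * x = 0" using zd T_def by blast
  then obtain x where x: "\<And>t. t \<in> T \<Longrightarrow> x t \<noteq> 0 \<and> (h + sc t 1) * x t = 0" by metis
  define g where "g s y = h * y + sc s y" for s y
  have g_lin: "Vector_Spaces.linear sc sc (g s)" for s
    unfolding Vector_Spaces.linear_iff g_def using vector_space_axioms
    by (auto simp: distrib_left sc_right[symmetric] scale_right_distrib scale_left_commute)
  have hx: "h * x t = - sc t (x t)" if "t \<in> T" for t
  proof -
    have "(h + sc t 1) * x t = h * x t + sc t (x t)" by (simp add: distrib_right sc_left[symmetric])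
    then show ?thesis using x[OF that] by (simp add: eq_neg_iff_add_eq_0)
  qed
  have gx: "g s (x t) = sc (s - t) (x t)" if "t \<in> T" for s t
    unfolding g_def hx[OF that] by (simp add: scale_left_diff_distrib)
  have inv: "g r z \<in> span (x ` T')" if "T' \<subseteq> T" "z \<in> span (x ` T')" for r z T'
  proof -
    have s: "subspace {z. g r z \<in> span (x ` T')}"
      using vp.linear_subspace_linear_preimage[OF g_lin subspace_span] .
    have b: "\<And>y. y \<in> x ` T' \<Longrightarrow> g r y \<in> span (x ` T')"
    proof -
      fix y assume "y \<in> x ` T'"
      then obtain t where t: "t \<in> T'" "y = x t" by blast
      have "g r y = sc (r - t) (x t)" using gx t that(1) by blast
      moreover have "x t \<in> span (x ` T')" using t(1) span_superset by blast
      ultimately show "g r y \<in> span (x ` T')" using span_scale by simp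
    qed
    show ?thesis using span_induct[where P="\<lambda>z. g r z \<in> span (x ` T')", OF that(2) s b] .
  qed
  have K: "T' \<subseteq> T \<longrightarrow> (\<forall>s \<in> T - T'. \<forall>y \<in> span (x ` T'). g s y = 0 \<longrightarrow> y = 0)" if "finite T'" for T'
    using that
  proof (induct T' rule: finite_induct)
    case empty then show ?case by simp
  next
    case (insert r T'')
    show ?case
    proof (intro impI ballI)
      fix s y assume sub: "insert r T'' \<subseteq> T" and s: "s \<in> T - insert r T''"
        and y: "y \<in> span (x ` insert r T'')" and gy: "g s y = 0"
      have rT: "r \<in> T" and sub': "T'' \<subseteq> T" using sub by auto
      have rs: "r \<noteq> s" using s by auto
      obtain k where k: "y - sc k (x r) \<in> span (x ` T'')"
        using y span_breakdown_eq[of y "x r" "x ` T''"] by auto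
      define z where "z = y - sc k (x r)"
      have grr: "g r (x r) = 0" using gx[OF rT, of r] by simp
      have "g r y = g r (z + sc k (x r))" unfolding z_def by simp
      also have "\<dots> = g r z + sc k (g r (x r))"
        using vp.linear_add[OF g_lin] vp.linear_scale[OF g_lin] by simp
      also have "\<dots> = g r z" using grr by simp
      finally have e1: "g r y = g r z" .
      have "g r y = g s y + sc (r - s) y" unfolding g_def by (simp add: scale_left_diff_distrib)
      then have e2: "g r y = sc (r - s) y" using gy by simp
      have "g r z \<in> span (x ` T'')" using inv[OF sub'] k z_def by blast
      then have "sc (r - s) y \<in> span (x ` T'')" using e1 e2 by simp
      then have "sc (inverse (r - s)) (sc (r - s) y) \<in> span (x ` T'')" using span_scale by blast
      then have yT: "y \<in> span (x ` T'')" using rs by simp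
      have "s \<in> T - T''" using s by auto
      then show "y = 0" using insert.hyps(3) sub' yT gy by blast
    qed
  qed
  have ind: "T' \<subseteq> T \<longrightarrow> independent (x ` T') \<and> inj_on x T'" if "finite T'" for T'
    using that
  proof (induct T' rule: finite_induct)
    case empty then show ?case using independent_empty by simp
  next
    case (insert r T'')
    show ?case
    proof
      assume sub: "insert r T'' \<subseteq> T"
      then have rT: "r \<in> T" and sub': "T'' \<subseteq> T" by auto
      have IH: "independent (x ` T'')" "inj_on x T''" using insert.hyps(3) sub' by auto
      have nz: "x r \<noteq> 0" using x[OF rT] by blast
      have grr: "g r (x r) = 0" using gx[OF rT, of r] by simp
      have nsp: "x r \<notin> span (x ` T'')"
        using K[OF insert.hyps(1)] sub' rT insert.hyps(2) grr nz by blast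
      have "independent (insert (x r) (x ` T''))" using independent_insertI[OF nsp IH(1)] .
      moreover have "x r \<notin> x ` T''" using nsp span_superset by blast
      ultimately show "independent (x ` insert r T'') \<and> inj_on x (insert r T'')"
        using IH(2) insert.hyps(2) by simp
    qed
  qed
  have finT: "finite T"
  proof (rule ccontr)
    assume "infinite T"
    then obtain T' where T': "finite T'" "card T' = Suc (card Bb)" "T' \<subseteq> T"
      using infinite_arbitrarily_large by blast
    have i: "independent (x ` T')" "inj_on x T'" using ind[OF T'(1)] T'(3) by auto
    have "x ` T' \<subseteq> span Bb" using spB by simp
    then have "card (x ` T') \<le> card Bb" using independent_span_bound[OF Bb(1) i(1)] by simp
    moreover have "card (x ` T') = card T'" using card_image[OF i(2)] .
    ultimately show False using T'(2) by simp
  qed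
  have "infinite (UNIV - insert 0 T)" using inf finT by simp
  then obtain t where t: "t \<notin> insert 0 T" by (metis Diff_iff finite.emptyI infinite_imp_nonempty ex_in_conv)
  have u: "h + sc t 1 \<in> units" using t T_def by blast
  have t0: "t \<noteq> 0" using t by blast
  have "sc (inverse t) (h + sc t 1) = 1 + sc (inverse t) h" using t0 by (simp add: scale_right_distrib)
  then have "1 + sc (inverse t) h \<in> units" using units_scale[OF u] t0 by (metis inverse_nonzero_iff_nonzero)
  then show ?thesis using t0 by (metis inverse_nonzero_iff_nonzero)
qed

end


context alg begin
lemma hs_units:
  assumes inf: "infinite (UNIV :: 'k set)" and hs: "Hs sc"
  shows "\<exists>c. c \<noteq> 0 \<and> 1 + sc c h \<in> units"
  using hs unfolding Hs_def
proof (elim disjE exE conjE)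
  assume "fin_dim_subspace sc (UNIV :: 'a set)"
  then show ?thesis using fd_units[OF inf] by blast
next
  fix \<phi> :: "'k \<Rightarrow> real" and N assume "field_iso \<phi>" "banach_norm sc (\<lambda>c. \<bar>\<phi> c\<bar>) N"
  then show ?thesis using banach_units_real by blast
next
  fix \<phi> :: "'k \<Rightarrow> complex" and N assume "field_iso \<phi>" "banach_norm sc (\<lambda>c. cmod (\<phi> c)) N"
  then show ?thesis using banach_units_complex by blast
next
  fix n and e :: "nat \<Rightarrow> 'a"
  assume "\<forall>x y :: 'a. x * y = y * x" "(\<Sum>i<n. e i) = 1"
    "\<forall>i<n. \<forall>j<n. e i * e j = (if i = j then e i else 0)"
    "\<forall>i<n. e i \<noteq> 0 \<and> (\<forall>x. e i * x \<noteq> 0 \<longrightarrow> (\<exists>y. e i * x * (e i * y) = e i))"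
  then show ?thesis using prod_units[OF inf] by blast
qed
end

theorem proposition5p2:
  fixes sc :: "'k::field \<Rightarrow> 'a::ring_1 \<Rightarrow> 'a"
    and V :: "'a set" and lam :: real
  assumes "infinite (UNIV :: 'k set)"
    and "is_algebra sc"
    and "Hs sc"
    and "fin_dim_subspace sc V" and "V \<inter> units \<noteq> {}"
    and "0 < lam" and "lam \<le> 1"
  shows "(\<exists>!H. atom sc lam V H \<and> 1 \<in> H) \<and>
    (\<forall>H. atom sc lam V H \<and> 1 \<in> H \<longrightarrow>
       subalgebra sc H \<and> left_stabilizer V \<subseteq> H \<and>
       (\<forall>W. (atom sc lam V W \<and> W \<inter> units \<noteq> {}) \<longleftrightarrow>
            (\<exists>x\<in>units. W = (\<lambda>h. x * h) ` H)) \<and>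
       (\<forall>W. admissible sc W \<longrightarrow>
            real (ldim sc (lspan sc (setprod W V)))
              \<ge> lam * real (ldim sc W) + real (ldim sc V) - lam * real (ldim sc H)))"
proof -
  have vs: "vector_space sc" and m: "\<And>c x y. sc c (x * y) = sc c x * y \<and> sc c (x * y) = x * sc c y"
    using assms(2) unfolding is_algebra_def by blast+
  interpret alg sc
    by (rule alg.intro[OF vs], unfold_locales) (use m in blast)+
  interpret cs sc V lam
    by unfold_locales (use assms in blast)+
  show ?thesis by (rule main) (rule hs_units[OF assms(1) assms(3)])
qed

end
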